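(* Let $f, g:\mathbb{D}\to\mathbb{C}$ be analytic functions on the open unit disc, and let $L_1, L_2$ be two line segments in $\mathbb{D}$ intersecting at a point $p$ at an angle $\theta\in(0,\pi/2)\setminus\pi\mathbb{Q}$. Suppose there are sequences $(a_n)\subset L_1\setminus\{p\}$ and $(b_n)\subset L_2\setminus\{p\}$ tending to $p$ such that $|f(a_n)|=|g(a_n)|$ and $|f(b_n)|=|g(b_n)|$ for all $n$. Then $f=\beta g$ for some constant $\beta\in\mathbb{T}$.
   Context: $\mathbb{D}=\{z\in\mathbb{C}:|z|<1\}$ and $\mathbb{T}=\{z\in\mathbb{C}:|z|=1\}$. $\pi\mathbb{Q}$ denotes the set of rational multiples of $\pi$. *)

theory Defs
  imports "HOL-Analysis.Analysis"
begin

definition is_line_segment :: "complex set \<Rightarrow> bool" where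
  "is_line_segment L \<longleftrightarrow> (\<exists>u v. u \<noteq> v \<and> L = closed_segment u v)"

text \<open>The (unoriented) angle in [0, pi/2] between the lines carrying two segments,
  computed from their direction vectors.\<close>
definition seg_angle :: "complex set \<Rightarrow> complex set \<Rightarrow> real" where
  "seg_angle L1 L2 = (THE t. \<exists>u1 v1 u2 v2. u1 \<noteq> v1 \<and> u2 \<noteq> v2 \<and>
      L1 = closed_segment u1 v1 \<and> L2 = closed_segment u2 v2 \<and>
      t = arccos (\<bar>Re ((v1 - u1) * cnj (v2 - u2))\<bar> / (cmod (v1 - u1) * cmod (v2 - u2))))"

end

theory Submission
  imports Defs "HOL-Complex_Analysis.Complex_Analysis"
begin


lemma dist_cnj_cnj: "dist (cnj a) (cnj b) = dist a b"
  by (metis complex_cnj_diff complex_mod_cnj dist_norm)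

lemma refl_hol:
  assumes f: "f holomorphic_on ball p r" and mu: "cmod mu = 1"
  shows "(\<lambda>w. cnj (f (p + mu * cnj (w - p)))) holomorphic_on ball p r"
proof -
  have 1: "(cnj \<circ> f \<circ> cnj) holomorphic_on ball (cnj p) r"
  proof (rule holomorphic_on_compose_cnj_cnj)
    have "cnj ` ball (cnj p) r = ball p r"
    proof (intro set_eqI iffI)
      fix x assume "x \<in> ball p r" then show "x \<in> cnj ` ball (cnj p) r"
        by (intro image_eqI[of _ _ "cnj x"]) (simp, metis dist_cnj_cnj complex_cnj_cnj mem_ball)
    qed (metis dist_cnj_cnj complex_cnj_cnj mem_ball imageE)
    then show "f holomorphic_on cnj ` ball (cnj p) r" using f by simp
  qed auto
  have 2: "(\<lambda>w. cnj p + cnj mu * (w - p)) holomorphic_on ball p r"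
    by (intro holomorphic_intros)
  have 3: "(\<lambda>w. cnj p + cnj mu * (w - p)) ` ball p r \<subseteq> ball (cnj p) r"
  proof
    fix y assume "y \<in> (\<lambda>w. cnj p + cnj mu * (w - p)) ` ball p r"
    then obtain w where w: "w \<in> ball p r" "y = cnj p + cnj mu * (w - p)" by auto
    have "dist (cnj p) y = cmod (cnj mu * (w - p))" using w by (simp add: dist_norm)
    also have "\<dots> = cmod (w - p)" using mu by (simp add: norm_mult)
    also have "\<dots> < r" using w by (simp add: dist_norm norm_minus_commute)
    finally show "y \<in> ball (cnj p) r" by simp
  qed
  have "((cnj \<circ> f \<circ> cnj) \<circ> (\<lambda>w. cnj p + cnj mu * (w - p))) holomorphic_on ball p r"
    by (rule holomorphic_on_compose_gen[OF 2 1 3])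
  moreover have "((cnj \<circ> f \<circ> cnj) \<circ> (\<lambda>w. cnj p + cnj mu * (w - p))) = (\<lambda>w. cnj (f (p + mu * cnj (w - p))))"
    by (auto simp: fun_eq_iff)
  ultimately show ?thesis by simp
qed

lemma line_lemma:
  fixes f g :: "complex \<Rightarrow> complex"
  assumes f: "f holomorphic_on ball p r" and g: "g holomorphic_on ball p r"
    and r: "r > 0" and e: "e \<noteq> 0"
    and on_line: "\<forall>n. \<exists>s::real. a n - p = of_real s * e"
    and ne: "\<forall>n. a n \<noteq> p" and lim: "a \<longlonglongrightarrow> p"
    and eq: "\<forall>n. cmod (f (a n)) = cmod (g (a n))"
    and w: "w \<in> ball p r"
  shows "f w * cnj (f (p + e / cnj e * cnj (w - p))) = g w * cnj (g (p + e / cnj e * cnj (w - p)))"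
proof -
  define mu where "mu = e / cnj e"
  have mu: "cmod mu = 1" using e by (simp add: mu_def norm_divide)
  define H where "H w = f w * cnj (f (p + mu * cnj (w - p))) - g w * cnj (g (p + mu * cnj (w - p)))" for w
  have Hh: "H holomorphic_on ball p r"
    unfolding H_def by (intro holomorphic_intros f g refl_hol mu)
  have refl: "p + mu * cnj (a n - p) = a n" for n
  proof -
    obtain s::real where s: "a n - p = of_real s * e" using on_line by blast
    have ce: "cnj e \<noteq> 0" using e by simp
    have "mu * cnj (a n - p) = of_real s * e" using ce by (simp add: s mu_def)
    then show ?thesis using s by (metis add.commute diff_add_cancel)
  qed
  have H0: "H (a n) = 0" for n
  proof -
    have "H (a n) = f (a n) * cnj (f (a n)) - g (a n) * cnj (g (a n))"
      unfolding H_def refl ..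
    also have "\<dots> = 0" by (simp only: complex_norm_square[symmetric] eq) simp
    finally show ?thesis .
  qed
  obtain N where N: "\<And>n. n \<ge> N \<Longrightarrow> dist (a n) p < r"
    using lim r unfolding LIMSEQ_def by blast
  have "p islimpt (range a \<inter> ball p r)"
    unfolding islimpt_sequential
  proof (intro exI conjI allI)
    fix n show "a (n + N) \<in> range a \<inter> ball p r - {p}"
      using N[of "n+N"] ne by (auto simp: dist_commute)
  next
    show "(\<lambda>n. a (n + N)) \<longlonglongrightarrow> p" using LIMSEQ_ignore_initial_segment[OF lim] .
  qed
  moreover have "p \<in> ball p r" using r by simp
  moreover have "\<And>z. z \<in> range a \<inter> ball p r \<Longrightarrow> H z = 0" using H0 by blast
  ultimately have "H w = 0"
    using analytic_continuation[OF Hh open_ball connected_ball, of "range a \<inter> ball p r" p w] w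
    by blast
  then show ?thesis by (simp add: H_def mu_def)
qed



lemma angle_lemma:
  fixes e1 e2 :: complex and \<theta> :: real
  assumes e1: "e1 \<noteq> 0" and e2: "e2 \<noteq> 0"
    and th: "\<theta> = arccos (\<bar>Re (e1 * cnj e2)\<bar> / (cmod e1 * cmod e2))"
    and pos: "0 < \<theta>" and lt: "\<theta> < pi / 2" and irr: "\<theta> / pi \<notin> \<rat>" and n: "n > 0"
  shows "((e1 * cnj e2) / cnj (e1 * cnj e2)) ^ n \<noteq> 1"
proof
  assume H: "((e1 * cnj e2) / cnj (e1 * cnj e2)) ^ n = 1"
  define w where "w = e1 * cnj e2"
  define \<phi> where "\<phi> = Arg w"
  have w0: "w \<noteq> 0" using e1 e2 by (simp add: w_def)
  have wr: "w = rcis (cmod w) \<phi>" by (simp add: \<phi>_def rcis_cmod_Arg)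
  have cw: "cnj w = rcis (cmod w) (- \<phi>)" unfolding \<phi>_def by (rule rcis_cnj)
  have "w / cnj w = (of_real (cmod w) * cis \<phi>) / (of_real (cmod w) * cis (- \<phi>))"
    using wr cw unfolding rcis_def by metis
  also have "\<dots> = cis \<phi> / cis (- \<phi>)" using w0 by simp
  also have "\<dots> = cis (2 * \<phi>)" unfolding cis_divide by simp
  finally have wc: "w / cnj w = cis (2 * \<phi>)" .
  have "cis (real n * (2 * \<phi>)) = (cis (2 * \<phi>)) ^ n" by (rule Complex.DeMoivre[symmetric])
  also have "\<dots> = 1" using H wc by (simp only: w_def)
  finally have "cis (real n * (2 * \<phi>)) = 1" .
  then have "exp (\<i> * complex_of_real (real n * (2 * \<phi>))) = 1" by (simp add: cis_conv_exp)
  then obtain m :: int where m: "real n * (2 * \<phi>) = of_int (2 * m) * pi"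
    unfolding exp_eq_1 by auto
  have phim: "\<phi> = pi * (of_int m / real n)" using m n by (simp add: field_simps)
  have rat: "\<bar>\<phi>\<bar> / pi \<in> \<rat>"
  proof -
    have "\<bar>\<phi>\<bar> / pi = \<bar>of_int m / real n\<bar>" using phim by (simp add: abs_mult)
    also have "\<dots> \<in> \<rat>" by (intro Rats_abs_iff[THEN iffD2] Rats_divide) auto
    finally show ?thesis .
  qed
  have rew: "Re w = cmod w * cos \<phi>" by (subst (1) wr) (simp add: rcis_def cis.sel)
  have cm: "cmod w = cmod e1 * cmod e2" by (simp add: w_def norm_mult)
  have thc: "\<theta> = arccos \<bar>cos \<phi>\<bar>"
    using th w0 by (simp add: rew cm[symmetric] abs_mult w_def[symmetric])
  have bnd: "\<bar>\<phi>\<bar> \<le> pi" using Arg_bounded[of w] by (auto simp: \<phi>_def)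
  have cabs: "cos \<bar>\<phi>\<bar> = cos \<phi>" by (simp add: abs_if)
  show False
  proof (cases "cos \<phi> \<ge> 0")
    case True
    then have "\<theta> = arccos (cos \<bar>\<phi>\<bar>)" using thc cabs by simp
    also have "\<dots> = \<bar>\<phi>\<bar>" using bnd by (intro arccos_cos) auto
    finally show False using rat irr by simp
  next
    case False
    then have "\<bar>cos \<phi>\<bar> = cos (pi - \<bar>\<phi>\<bar>)" using cabs by simp
    then have "\<theta> = arccos (cos (pi - \<bar>\<phi>\<bar>))" using thc by simp
    also have "\<dots> = pi - \<bar>\<phi>\<bar>" using bnd by (intro arccos_cos) auto
    finally have "\<theta> / pi = 1 - \<bar>\<phi>\<bar> / pi" by (simp add: field_simps)
    also have "\<dots> \<in> \<rat>" using rat by (intro Rats_diff) auto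
    finally show False using irr by simp
  qed
qed



lemma seg_diff:
  fixes u v x y :: complex
  assumes "x \<in> closed_segment u v" "y \<in> closed_segment u v"
  shows "\<exists>s::real. x - y = of_real s * (v - u)"
proof -
  obtain t1 where t1: "x = (1 - t1) *\<^sub>R u + t1 *\<^sub>R v" using assms(1) unfolding closed_segment_def by blast
  obtain t2 where t2: "y = (1 - t2) *\<^sub>R u + t2 *\<^sub>R v" using assms(2) unfolding closed_segment_def by blast
  have "x - y = of_real (t1 - t2) * (v - u)"
    unfolding t1 t2 scaleR_conv_of_real by (simp add: algebra_simps)
  then show ?thesis by blast
qed

lemma formula_sym:
  fixes e1 e2 e1' e2' :: complex
  assumes "e1' = e1 \<or> e1' = - e1" "e2' = e2 \<or> e2' = - e2"
  shows "\<bar>Re (e1' * cnj e2')\<bar> / (cmod e1' * cmod e2') = \<bar>Re (e1 * cnj e2)\<bar> / (cmod e1 * cmod e2)"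
  using assms by auto

lemma seg_dir:
  fixes u v u' v' :: complex
  assumes "closed_segment u v = closed_segment u' v'"
  shows "v' - u' = v - u \<or> v' - u' = - (v - u)"
proof -
  have "{u, v} = {u', v'}" using assms by simp
  then have "(u' = u \<and> v' = v) \<or> (u' = v \<and> v' = u)" by (auto simp: doubleton_eq_iff)
  then show ?thesis by auto
qed

lemma seg_angle_ex:
  assumes L1: "L1 = closed_segment u1 v1" "u1 \<noteq> v1" and L2: "L2 = closed_segment u2 v2" "u2 \<noteq> v2"
  shows "\<exists>!t. \<exists>u1 v1 u2 v2. u1 \<noteq> v1 \<and> u2 \<noteq> v2 \<and>
      L1 = closed_segment u1 v1 \<and> L2 = closed_segment u2 v2 \<and>
      t = arccos (\<bar>Re ((v1 - u1) * cnj (v2 - u2))\<bar> / (cmod (v1 - u1) * cmod (v2 - u2)))"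
proof (rule ex_ex1I)
  show "\<exists>t u1 v1 u2 v2. u1 \<noteq> v1 \<and> u2 \<noteq> v2 \<and>
      L1 = closed_segment u1 v1 \<and> L2 = closed_segment u2 v2 \<and>
      t = arccos (\<bar>Re ((v1 - u1) * cnj (v2 - u2))\<bar> / (cmod (v1 - u1) * cmod (v2 - u2)))"
    using assms by blast
next
  fix t t'
  assume "\<exists>u1 v1 u2 v2. u1 \<noteq> v1 \<and> u2 \<noteq> v2 \<and>
      L1 = closed_segment u1 v1 \<and> L2 = closed_segment u2 v2 \<and>
      t = arccos (\<bar>Re ((v1 - u1) * cnj (v2 - u2))\<bar> / (cmod (v1 - u1) * cmod (v2 - u2)))"
  then obtain a1 b1 a2 b2 where A: "L1 = closed_segment a1 b1" "L2 = closed_segment a2 b2"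
    "t = arccos (\<bar>Re ((b1 - a1) * cnj (b2 - a2))\<bar> / (cmod (b1 - a1) * cmod (b2 - a2)))" by blast
  assume "\<exists>u1 v1 u2 v2. u1 \<noteq> v1 \<and> u2 \<noteq> v2 \<and>
      L1 = closed_segment u1 v1 \<and> L2 = closed_segment u2 v2 \<and>
      t' = arccos (\<bar>Re ((v1 - u1) * cnj (v2 - u2))\<bar> / (cmod (v1 - u1) * cmod (v2 - u2)))"
  then obtain c1 d1 c2 d2 where B: "L1 = closed_segment c1 d1" "L2 = closed_segment c2 d2"
    "t' = arccos (\<bar>Re ((d1 - c1) * cnj (d2 - c2))\<bar> / (cmod (d1 - c1) * cmod (d2 - c2)))" by blast
  have "d1 - c1 = b1 - a1 \<or> d1 - c1 = - (b1 - a1)" using A B by (intro seg_dir) simp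
  moreover have "d2 - c2 = b2 - a2 \<or> d2 - c2 = - (b2 - a2)" using A B by (intro seg_dir) simp
  ultimately show "t = t'" using A(3) B(3) formula_sym by metis
qed



lemma main_local:
  fixes f g :: "complex \<Rightarrow> complex"
  assumes f: "f holomorphic_on ball p r" and g: "g holomorphic_on ball p r" and r: "r > 0"
    and gnz: "\<And>w. w \<in> ball p r - {p} \<Longrightarrow> g w \<noteq> 0"
    and m1: "cmod m1 = 1" and m2: "cmod m2 = 1"
    and E1: "\<And>w. w \<in> ball p r \<Longrightarrow> f w * cnj (f (p + m1 * cnj (w - p))) = g w * cnj (g (p + m1 * cnj (w - p)))"
    and E2: "\<And>w. w \<in> ball p r \<Longrightarrow> f w * cnj (f (p + m2 * cnj (w - p))) = g w * cnj (g (p + m2 * cnj (w - p)))"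
    and lam: "\<And>n. n > 0 \<Longrightarrow> (m1 * cnj m2) ^ n \<noteq> 1"
  shows "\<exists>c. cmod c = 1 \<and> (\<forall>w\<in>ball p r - {p}. f w = c * g w)"
proof -
  define B where "B = ball p r - {p}"
  define h where "h w = f w / g w" for w
  define R1 where "R1 w = p + m1 * cnj (w - p)" for w
  define R2 where "R2 w = p + m2 * cnj (w - p)" for w
  define lm where "lm = m1 * cnj m2"
  have lam1: "cmod lm = 1" using m1 m2 by (simp add: lm_def norm_mult)
  have m1c: "m1 * cnj m1 = 1" using m1 by (metis complex_norm_square of_real_1 power_one)
  have m2c: "m2 * cnj m2 = 1" using m2 by (metis complex_norm_square of_real_1 power_one)
  have RB: "p + m * cnj (w - p) \<in> B" if "w \<in> B" "cmod m = 1" for w m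
  proof -
    have "dist p (p + m * cnj (w - p)) = cmod (w - p)" using that(2) by (simp add: dist_norm norm_mult complex_cnj_diff[symmetric] del: complex_cnj_diff)
    moreover have "m * cnj (w - p) \<noteq> 0" using that by (auto simp: B_def)
    ultimately show ?thesis using that(1) by (auto simp: B_def dist_norm norm_minus_commute)
  qed
  have R1B: "R1 w \<in> B" if "w \<in> B" for w using RB[OF that m1] by (simp add: R1_def)
  have R2B: "R2 w \<in> B" if "w \<in> B" for w using RB[OF that m2] by (simp add: R2_def)
  have R22: "R2 (R2 y) = y" for y
  proof -
    have "R2 (R2 y) = p + (m2 * cnj m2) * (y - p)" by (simp add: R2_def algebra_simps)
    then show ?thesis using m2c by simp
  qed
  have R12: "R1 (R2 y) = p + lm * (y - p)" for y
    by (simp add: R1_def R2_def lm_def algebra_simps)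
  have Bsub: "B \<subseteq> ball p r" by (auto simp: B_def)
  have H1: "h w * cnj (h (R1 w)) = 1" if "w \<in> B" for w
  proof -
    have "g w \<noteq> 0" "g (R1 w) \<noteq> 0" using gnz R1B that by (auto simp: B_def)
    moreover have "f w * cnj (f (R1 w)) = g w * cnj (g (R1 w))" using E1 that Bsub R1_def by auto
    ultimately show ?thesis by (simp add: h_def field_simps)
  qed
  have H2: "h w * cnj (h (R2 w)) = 1" if "w \<in> B" for w
  proof -
    have "g w \<noteq> 0" "g (R2 w) \<noteq> 0" using gnz R2B that by (auto simp: B_def)
    moreover have "f w * cnj (f (R2 w)) = g w * cnj (g (R2 w))" using E2 that Bsub R2_def by auto
    ultimately show ?thesis by (simp add: h_def field_simps)
  qed
  have H12: "h (R1 w) = h (R2 w)" if "w \<in> B" for w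
  proof -
    have "h w \<noteq> 0" using H1[OF that] by auto
    then have "cnj (h (R1 w)) = cnj (h (R2 w))" using H1[OF that] H2[OF that]
      by (metis mult_left_cancel)
    then show ?thesis by simp
  qed
  have Hlam: "h (p + lm * (y - p)) = h y" if "y \<in> B" for y
    using H12[OF R2B[OF that]] by (simp add: R12 R22)
  have lamB: "p + lm * (y - p) \<in> B" if "y \<in> B" for y
  proof -
    have "dist p (p + lm * (y - p)) = cmod (y - p)" using lam1 by (simp add: dist_norm norm_mult)
    moreover have "lm * (y - p) \<noteq> 0" using that lam1 by (auto simp: B_def)
    ultimately show ?thesis using that by (auto simp: B_def dist_norm norm_minus_commute)
  qed
  have Hn: "h (p + lm ^ n * (y - p)) = h y \<and> p + lm ^ n * (y - p) \<in> B" if "y \<in> B" for y n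
  proof (induction n)
    case 0
    then show ?case using that by simp
  next
    case (Suc n)
    have e: "p + lm ^ Suc n * (y - p) = p + lm * ((p + lm ^ n * (y - p)) - p)" by (simp add: algebra_simps)
    show ?case unfolding e using Suc Hlam lamB by metis
  qed
  define y0 where "y0 = p + of_real (r / 2)"
  have y0B: "y0 \<in> B" using r by (simp add: B_def y0_def dist_norm)
  define T where "T = range (\<lambda>n. p + lm ^ n * of_real (r / 2))"
  have lmn0: "lm ^ n \<noteq> 0" for n using lam1 by auto
  have inj: "inj (\<lambda>n. p + lm ^ n * of_real (r / 2))"
  proof (rule injI)
    fix n m assume "p + lm ^ n * of_real (r / 2) = p + lm ^ m * of_real (r / 2)"
    then have eq: "lm ^ n = lm ^ m" using r by simp
    show "n = m"
    proof (rule ccontr)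
      assume "n \<noteq> m"
      then consider "n < m" | "m < n" by linarith
      then show False
      proof cases
        case 1
        then have "lm ^ m = lm ^ n * lm ^ (m - n)" by (simp add: power_add[symmetric])
        then have "lm ^ (m - n) = 1" using eq lmn0[of n] by (metis mult_cancel_left1)
        then show False using lam 1 by (simp add: lm_def)
      next
        case 2
        then have "lm ^ n = lm ^ m * lm ^ (n - m)" by (simp add: power_add[symmetric])
        then have "lm ^ (n - m) = 1" using eq lmn0[of m] by (metis mult_cancel_left1)
        then show False using lam 2 by (simp add: lm_def)
      qed
    qed
  qed
  have Tinf: "infinite T" unfolding T_def by (rule range_inj_infinite[OF inj])
  have Tsph: "T \<subseteq> sphere p (r / 2)"
    using r lam1 by (auto simp: T_def dist_norm norm_mult norm_power)
  obtain \<zeta> where \<zeta>: "\<zeta> \<in> sphere p (r / 2)" "\<zeta> islimpt T"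
    using compact_sphere[of p "r/2"] Tinf Tsph unfolding compact_eq_Bolzano_Weierstrass by blast
  have sphB: "sphere p (r / 2) \<subseteq> B" using r by (auto simp: B_def)
  have hol: "(\<lambda>w. h w - h y0) holomorphic_on B"
    unfolding h_def
    by (intro holomorphic_intros holomorphic_on_subset[OF f Bsub] holomorphic_on_subset[OF g Bsub])
       (use gnz B_def in auto)
  have oB: "open B" by (simp add: B_def open_delete)
  have cB: "connected B" unfolding B_def by (rule connected_punctured_ball) simp
  have T0: "h z - h y0 = 0" if zT: "z \<in> T" for z
  proof -
    obtain n where z: "z = p + lm ^ n * (y0 - p)" using zT unfolding T_def y0_def by auto
    show ?thesis using Hn[OF y0B, of n] z by simp
  qed
  have hc: "h w = h y0" if "w \<in> B" for w
    using analytic_continuation[OF hol oB cB order.trans[OF Tsph sphB] _ \<zeta>(2) T0 that] \<zeta>(1) sphB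
    by auto
  define c where "c = h y0"
  have "c * cnj c = 1" using H1[OF y0B] hc[OF R1B[OF y0B]] by (simp add: c_def)
  then have "of_real ((cmod c)^2) = (1::complex)" by (simp only: complex_norm_square)
  then have "(cmod c)^2 = 1" by (metis of_real_1 of_real_eq_iff)
  then have c1: "cmod c = 1" using norm_ge_zero[of c] by (auto simp: power2_eq_1_iff)
  have "f w = c * g w" if "w \<in> ball p r - {p}" for w
  proof -
    have "w \<in> B" using that by (simp add: B_def)
    then have "f w / g w = c" "g w \<noteq> 0" using hc gnz that by (auto simp: h_def c_def)
    then show ?thesis by (simp add: field_simps)
  qed
  then show ?thesis using c1 by blast
qed


theorem corollary2p5:
  fixes f g :: "complex \<Rightarrow> complex" and L1 L2 :: "complex set" and p :: complex
    and \<theta> :: real and a b :: "nat \<Rightarrow> complex"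
  assumes "f holomorphic_on ball 0 1" and "g holomorphic_on ball 0 1"
    and "is_line_segment L1" and "is_line_segment L2"
    and "L1 \<subseteq> ball 0 1" and "L2 \<subseteq> ball 0 1"
    and "p \<in> L1" and "p \<in> L2"
    and "seg_angle L1 L2 = \<theta>"
    and "0 < \<theta>" and "\<theta> < pi / 2" and "\<theta> / pi \<notin> \<rat>"
    and "\<And>n. a n \<in> L1 - {p}" and "\<And>n. b n \<in> L2 - {p}"
    and "a \<longlonglongrightarrow> p" and "b \<longlonglongrightarrow> p"
    and "\<And>n. cmod (f (a n)) = cmod (g (a n))"
    and "\<And>n. cmod (f (b n)) = cmod (g (b n))"
  shows "\<exists>\<beta>. cmod \<beta> = 1 \<and> (\<forall>z\<in>ball 0 1. f z = \<beta> * g z)"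
proof -
  note fh = assms(1) and gh = assms(2)
  obtain U1 V1 where UV1: "U1 \<noteq> V1" "L1 = closed_segment U1 V1"
    using assms(3) unfolding is_line_segment_def by blast
  obtain U2 V2 where UV2: "U2 \<noteq> V2" "L2 = closed_segment U2 V2"
    using assms(4) unfolding is_line_segment_def by blast
  have "\<exists>u1 v1 u2 v2. u1 \<noteq> v1 \<and> u2 \<noteq> v2 \<and>
      L1 = closed_segment u1 v1 \<and> L2 = closed_segment u2 v2 \<and>
      seg_angle L1 L2 = arccos (\<bar>Re ((v1 - u1) * cnj (v2 - u2))\<bar> / (cmod (v1 - u1) * cmod (v2 - u2)))"
    unfolding seg_angle_def by (rule theI'[OF seg_angle_ex[OF UV1(2,1) UV2(2,1)]])
  then obtain u1 v1 u2 v2 where uv: "u1 \<noteq> v1" "u2 \<noteq> v2" "L1 = closed_segment u1 v1"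
      "L2 = closed_segment u2 v2"
      and sa: "seg_angle L1 L2 = arccos (\<bar>Re ((v1 - u1) * cnj (v2 - u2))\<bar> / (cmod (v1 - u1) * cmod (v2 - u2)))"
    by blast
  have th: "\<theta> = arccos (\<bar>Re ((v1 - u1) * cnj (v2 - u2))\<bar> / (cmod (v1 - u1) * cmod (v2 - u2)))"
    using assms(9) sa by simp
  define e1 where "e1 = v1 - u1"
  define e2 where "e2 = v2 - u2"
  have e1: "e1 \<noteq> 0" and e2: "e2 \<noteq> 0" using uv by (auto simp: e1_def e2_def)
  have pB: "p \<in> ball 0 1" using assms(5,7) by blast
  have aL: "a n \<in> L1" "a n \<noteq> p" for n using assms(13)[of n] by auto
  have bL: "b n \<in> L2" "b n \<noteq> p" for n using assms(14)[of n] by auto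
  show ?thesis
  proof (cases "\<forall>z\<in>ball 0 1. g z = 0")
    case True
    have f0: "f z = 0" if zr: "z \<in> range a" for z
    proof -
      obtain n where z: "z = a n" using zr by blast
      have "a n \<in> ball 0 1" using aL assms(5) by blast
      then have "cmod (f (a n)) = 0" using True assms(17)[of n] by simp
      then show ?thesis using z by simp
    qed
    have lp: "p islimpt range a"
      unfolding islimpt_sequential using aL assms(15) by (intro exI[of _ a] conjI allI) auto
    have sub: "range a \<subseteq> ball 0 1" using aL assms(5) by blast
    have "f z = 1 * g z" if "z \<in> ball 0 1" for z
      using analytic_continuation[OF fh open_ball connected_ball sub pB lp f0 that] True that by simp
    then show ?thesis by (intro exI[of _ 1]) simp
  next
    case False
    then obtain z0 where z0: "z0 \<in> ball 0 1" "g z0 \<noteq> 0" by blast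
    have "\<forall>\<^sub>F w in at p. g w \<noteq> 0 \<and> w \<in> ball 0 1"
      by (rule non_zero_neighbour_alt[OF gh open_ball connected_ball pB z0])
    then obtain d where d: "d > 0" "\<And>x. x \<noteq> p \<Longrightarrow> dist x p < d \<Longrightarrow> g x \<noteq> 0"
      unfolding eventually_at by auto
    define r where "r = min d (1 - cmod p)"
    have r: "r > 0" using d pB by (simp add: r_def)
    have sub: "ball p r \<subseteq> ball 0 1"
    proof
      fix x assume "x \<in> ball p r"
      then have "dist p x < 1 - cmod p" by (simp add: r_def)
      moreover have "cmod x \<le> cmod p + cmod (x - p)" by (rule norm_triangle_sub)
      moreover have "dist p x = cmod (x - p)" by (simp add: dist_norm norm_minus_commute)
      ultimately show "x \<in> ball 0 1" by simp
    qed
    have f: "f holomorphic_on ball p r" using holomorphic_on_subset[OF fh sub] .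
    have g: "g holomorphic_on ball p r" using holomorphic_on_subset[OF gh sub] .
    have gnz: "g w \<noteq> 0" if "w \<in> ball p r - {p}" for w
      using d(2)[of w] that by (auto simp: r_def dist_commute)
    have ol1: "\<forall>n. \<exists>s::real. a n - p = of_real s * e1"
    proof
      fix n show "\<exists>s::real. a n - p = of_real s * e1"
        unfolding e1_def by (rule seg_diff) (use aL(1)[of n] assms(7) uv(3) in simp_all)
    qed
    have ol2: "\<forall>n. \<exists>s::real. b n - p = of_real s * e2"
    proof
      fix n show "\<exists>s::real. b n - p = of_real s * e2"
        unfolding e2_def by (rule seg_diff) (use bL(1)[of n] assms(8) uv(4) in simp_all)
    qed
    define m1 where "m1 = e1 / cnj e1"
    define m2 where "m2 = e2 / cnj e2"
    have m1: "cmod m1 = 1" using e1 by (simp add: m1_def norm_divide)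
    have m2: "cmod m2 = 1" using e2 by (simp add: m2_def norm_divide)
    have E1: "f w * cnj (f (p + m1 * cnj (w - p))) = g w * cnj (g (p + m1 * cnj (w - p)))"
      if "w \<in> ball p r" for w
      unfolding m1_def
      by (rule line_lemma[OF f g r e1 ol1]) (use aL assms(15) assms(17) that in auto)
    have E2: "f w * cnj (f (p + m2 * cnj (w - p))) = g w * cnj (g (p + m2 * cnj (w - p)))"
      if "w \<in> ball p r" for w
      unfolding m2_def
      by (rule line_lemma[OF f g r e2 ol2]) (use bL assms(16) assms(18) that in auto)
    have lmeq: "m1 * cnj m2 = (e1 * cnj e2) / cnj (e1 * cnj e2)"
      using e1 e2 by (simp add: m1_def m2_def field_simps)
    have lam: "(m1 * cnj m2) ^ n \<noteq> 1" if "n > 0" for n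
      unfolding lmeq
      by (rule angle_lemma[OF e1 e2 _ assms(10,11,12) that]) (simp add: th e1_def e2_def)
    obtain c where c: "cmod c = 1" "\<And>w. w \<in> ball p r - {p} \<Longrightarrow> f w = c * g w"
      using main_local[OF f g r gnz m1 m2 E1 E2 lam] by blast
    have "f z = c * g z" if "z \<in> ball 0 1" for z
    proof (rule analytic_continuation_open[where s="ball p r - {p}" and s'="ball 0 1" and f=f and g="\<lambda>z. c * g z"])
      have "p + of_real (r/2) \<in> ball p r - {p}" using r by (simp add: dist_norm)
      then show "ball p r - {p} \<noteq> {}" by blast
    qed (use sub c fh gh that in \<open>auto intro!: holomorphic_intros simp: open_delete\<close>)
    then show ?thesis using c(1) by blast
  qed
qed

end
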